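(* Let $\mathcal B=(B_1,\dots,B_d)$ be a splitting of order $d$ of $B_J\in\mathbb R^{n\times n}$ and let $r\ge0$ be an integer. Then $T(\mathcal B)$ and $T(\mathcal S^r(\mathcal B))$ have the same nonzero eigenvalues; in particular $\rho(T(\mathcal B))=\rho(T(\mathcal S^r(\mathcal B)))$.
   Context: For $B\in\mathbb R^{n\times n}$, a splitting of $B$ of order $d\ge1$ is an ordered $d$-tuple $\mathcal B=(B_1,\dots,B_d)$ of real $n\times n$ matrices with $B_p\neq O$ for all $p$, $\sum_{p=1}^d B_p=B$, and $B_p\circ B_q=O$ (Hadamard product) for $p\ne q$. The iteration matrix of $\mathcal B$ is the $dn\times dn$ matrix $T(\mathcal B)=(I_{dn}-\mathcal L)^{-1}\mathcal U$, where $\mathcal L,\mathcal U$ are $d\times d$ block matrices with $n\times n$ blocks, $\mathcal L_{ij}=B_j$ if $i>j$ and $O$ otherwise, $\mathcal U_{ij}=B_j$ if $i\le j$ and $O$ otherwise. The cyclic shift is $\mathcal S(B_1,\dots,B_d)=(B_d,B_1,\dots,B_{d-1})$, and $\mathcal S^r$ is its $r$-fold iterate. $\rho$ denotes spectral radius. *)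

theory Defs
  imports "Jordan_Normal_Form.Spectral_Radius" "Jordan_Normal_Form.Gauss_Jordan_Elimination"
begin

definition is_splitting :: "nat \<Rightarrow> real mat \<Rightarrow> real mat list \<Rightarrow> bool" where
  "is_splitting n B Bs \<longleftrightarrow>
     B \<in> carrier_mat n n \<and> length Bs \<ge> 1 \<and>
     (\<forall>p < length Bs. Bs ! p \<in> carrier_mat n n \<and> Bs ! p \<noteq> 0\<^sub>m n n) \<and>
     (\<forall>i < n. \<forall>j < n. B $$ (i, j) = (\<Sum>p < length Bs. (Bs ! p) $$ (i, j))) \<and>
     (\<forall>p < length Bs. \<forall>q < length Bs. p \<noteq> q \<longrightarrow>
        (\<forall>i < n. \<forall>j < n. (Bs ! p) $$ (i, j) * (Bs ! q) $$ (i, j) = 0))"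

text \<open>Block matrices: block (i,j) (0-indexed) of L is B_j if i > j, else O;
  block (i,j) of U is B_j if i \<le> j, else O.\<close>

definition blockL :: "nat \<Rightarrow> real mat list \<Rightarrow> real mat" where
  "blockL n Bs = mat (length Bs * n) (length Bs * n)
     (\<lambda>(i, j). if i div n > j div n then (Bs ! (j div n)) $$ (i mod n, j mod n) else 0)"

definition blockU :: "nat \<Rightarrow> real mat list \<Rightarrow> real mat" where
  "blockU n Bs = mat (length Bs * n) (length Bs * n)
     (\<lambda>(i, j). if i div n \<le> j div n then (Bs ! (j div n)) $$ (i mod n, j mod n) else 0)"

text \<open>Iteration matrix T = (I - L)^{-1} U (I - L is unit lower triangular, hence invertible).\<close>

definition iter_mat :: "nat \<Rightarrow> real mat list \<Rightarrow> real mat" where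
  "iter_mat n Bs = the (mat_inverse (1\<^sub>m (length Bs * n) - blockL n Bs)) * blockU n Bs"

definition cyc_shift :: "'a list \<Rightarrow> 'a list" where
  "cyc_shift xs = last xs # butlast xs"

definition nonzero_eigenvalues :: "real mat \<Rightarrow> complex set" where
  "nonzero_eigenvalues A = {k. k \<noteq> 0 \<and> eigenvalue (map_mat complex_of_real A) k}"

end

theory Submission
  imports Defs
begin

definition cf :: "complex \<Rightarrow> nat \<Rightarrow> nat \<Rightarrow> complex" where
  "cf k i j = (if i \<le> j then 1 else k)"

definition Gsys :: "real mat list \<Rightarrow> nat \<Rightarrow> complex \<Rightarrow> (nat \<Rightarrow> nat \<Rightarrow> complex) \<Rightarrow> bool" where
  "Gsys Bs n k x \<longleftrightarrow> (\<forall>i<length Bs. \<forall>p<n.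
     (\<Sum>j<length Bs. cf k i j * (\<Sum>q<n. complex_of_real (Bs ! j $$ (p,q)) * x j q)) = k * x i p)"

lemma sum_split: fixes d n :: nat shows "(\<Sum>b<d*n. f b) = (\<Sum>j<d. \<Sum>q<n. f (j*n+q))"
proof (induction d)
  case 0 then show ?case by simp
next
  case (Suc d)
  have e: "{..<Suc d * n} = {..<d*n} \<union> {d*n..<d*n+n}" by auto
  have s: "(\<Sum>b\<in>{d*n..<d*n+n}. f b) = (\<Sum>q<n. f (d*n+q))"
    by (rule sum.reindex_bij_witness[of _ "\<lambda>q. d*n+q" "\<lambda>b. b - d*n"]) auto
  have "(\<Sum>b<Suc d*n. f b) = (\<Sum>b<d*n. f b) + (\<Sum>b\<in>{d*n..<d*n+n}. f b)"
    unfolding e by (rule sum.union_disjoint) auto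
  then have "(\<Sum>b<Suc d*n. f b) = (\<Sum>b<d*n. f b) + (\<Sum>q<n. f (d*n+q))" using s by simp
  then show ?case using Suc.IH by simp
qed

lemma idx_lt: "i < d \<Longrightarrow> p < (n::nat) \<Longrightarrow> i*n+p < d*n"
proof -
  assume "i < d" "p < n"
  then have "i*n + p < i*n + n" by simp
  also have "\<dots> = Suc i * n" by simp
  also have "\<dots> \<le> d * n" using \<open>i<d\<close> by (intro mult_le_mono1) simp
  finally show ?thesis .
qed

lemma inv_ex:
  "\<exists>Mi. mat_inverse (1\<^sub>m (length Bs * n) - blockL n Bs) = Some Mi \<and>
     (1\<^sub>m (length Bs * n) - blockL n Bs) * Mi = 1\<^sub>m (length Bs * n) \<and>
     Mi * (1\<^sub>m (length Bs * n) - blockL n Bs) = 1\<^sub>m (length Bs * n) \<and>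
     Mi \<in> carrier_mat (length Bs * n) (length Bs * n)"
proof -
  define N where "N = length Bs * n"
  define M where "M = 1\<^sub>m N - blockL n Bs"
  have Mc: "M \<in> carrier_mat N N" unfolding M_def N_def blockL_def by (rule minus_carrier_mat) simp
  have lt: "M $$ (i,j) = 0" if "i < j" "j < N" for i j
  proof -
    have "i div n \<le> j div n" using that by (intro div_le_mono) simp
    then show ?thesis using that by (simp add: M_def N_def blockL_def)
  qed
  have "det M = prod_list (diag_mat M)" by (rule det_lower_triangular[OF lt Mc])
  also have "diag_mat M = replicate N 1"
    by (rule nth_equalityI) (auto simp: diag_mat_def M_def N_def blockL_def)
  finally have "det M = 1" by simp
  then have dne: "det M \<noteq> 0" by simp
  have u: "M \<in> Units (ring_mat TYPE(real) N ())" by (rule det_non_zero_imp_unit[OF Mc dne])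
  obtain Mi where Mi: "mat_inverse M = Some Mi"
    using mat_inverse(1)[OF Mc, of "()"] u by (cases "mat_inverse M") auto
  have "M * Mi = 1\<^sub>m N \<and> Mi * M = 1\<^sub>m N \<and> Mi \<in> carrier_mat N N" by (rule mat_inverse(2)[OF Mc Mi])
  with Mi show ?thesis unfolding M_def N_def by blast
qed

lemma iter_carrier: "iter_mat n Bs \<in> carrier_mat (length Bs * n) (length Bs * n)"
  using inv_ex[of Bs n] by (auto simp: iter_mat_def blockU_def)

lemma mv_comp: "A \<in> carrier_mat N N \<Longrightarrow> v \<in> carrier_vec N \<Longrightarrow> a < N \<Longrightarrow>
   (A *\<^sub>v v) $ a = (\<Sum>b<N. A $$ (a,b) * v $ b)"
  by (auto simp: scalar_prod_def lessThan_atLeast0 intro!: sum.cong)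

lemma dq: fixes n :: nat assumes "q < n" shows "(j*n+q) div n = j" "(j*n+q) mod n = q"
  using assms by auto

lemma eig_char:
  fixes k :: complex
  shows "eigenvalue (map_mat complex_of_real (iter_mat n Bs)) k \<longleftrightarrow>
     (\<exists>x. (\<exists>i<length Bs. \<exists>p<n. x i p \<noteq> 0) \<and> Gsys Bs n k x)"
proof -
  define d where "d = length Bs"
  define N where "N = d * n"
  define M where "M = 1\<^sub>m N - blockL n Bs"
  define U where "U = blockU n Bs"
  define L where "L = blockL n Bs"
  obtain Mi where Mi: "mat_inverse M = Some Mi" "M * Mi = 1\<^sub>m N" "Mi * M = 1\<^sub>m N" "Mi \<in> carrier_mat N N"
    using inv_ex[of Bs n] unfolding M_def N_def d_def by blast
  have Mc: "M \<in> carrier_mat N N" and Uc: "U \<in> carrier_mat N N" and Lc: "L \<in> carrier_mat N N"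
    unfolding M_def U_def L_def N_def d_def blockL_def blockU_def by (auto intro!: minus_carrier_mat)
  have T: "iter_mat n Bs = Mi * U" using Mi(1) by (simp add: iter_mat_def M_def N_def d_def U_def)
  define c where "c = map_mat complex_of_real"
  define TT where "TT = c (iter_mat n Bs)"
  define UU where "UU = c U"
  define LL where "LL = c L"
  define MM where "MM = c M"
  define MI where "MI = c Mi"
  have TT: "TT = MI * UU" using T of_real_hom.mat_hom_mult[OF Mi(4) Uc] by (simp add: TT_def MI_def UU_def c_def)
  have one1: "MM * MI = 1\<^sub>m N" using of_real_hom.mat_hom_mult[OF Mc Mi(4)] Mi(2) of_real_hom.mat_hom_one[of N]
    unfolding MM_def MI_def c_def by metis
  have one2: "MI * MM = 1\<^sub>m N" using of_real_hom.mat_hom_mult[OF Mi(4) Mc] Mi(3) of_real_hom.mat_hom_one[of N]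
    unfolding MM_def MI_def c_def by metis
  have car: "TT \<in> carrier_mat N N" "UU \<in> carrier_mat N N" "MM \<in> carrier_mat N N" "MI \<in> carrier_mat N N"
     "LL \<in> carrier_mat N N"
    using Mc Uc Lc Mi(4) by (simp_all add: TT UU_def MM_def MI_def LL_def c_def)
  have key1: "TT *\<^sub>v v = k \<cdot>\<^sub>v v \<longleftrightarrow> UU *\<^sub>v v = k \<cdot>\<^sub>v (MM *\<^sub>v v)" if v: "v \<in> carrier_vec N" for v
  proof
    assume e: "TT *\<^sub>v v = k \<cdot>\<^sub>v v"
    have "UU *\<^sub>v v = (MM * MI) *\<^sub>v (UU *\<^sub>v v)" using one1 v car by simp
    also have "\<dots> = MM *\<^sub>v (MI *\<^sub>v (UU *\<^sub>v v))"
      by (rule assoc_mult_mat_vec) (use car v in auto)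
    also have "\<dots> = MM *\<^sub>v (TT *\<^sub>v v)" using car v TT assoc_mult_mat_vec[of MI N N UU N v] by simp
    also have "\<dots> = k \<cdot>\<^sub>v (MM *\<^sub>v v)" using e car v mult_mat_vec[of MM N N v k] by simp
    finally show "UU *\<^sub>v v = k \<cdot>\<^sub>v (MM *\<^sub>v v)" .
  next
    assume e: "UU *\<^sub>v v = k \<cdot>\<^sub>v (MM *\<^sub>v v)"
    have mv: "MI *\<^sub>v (MM *\<^sub>v v) = v" using car v one2 assoc_mult_mat_vec[of MI N N MM N v] by simp
    have "TT *\<^sub>v v = MI *\<^sub>v (UU *\<^sub>v v)" using TT car v assoc_mult_mat_vec[of MI N N UU N v] by simp
    also have "\<dots> = MI *\<^sub>v (k \<cdot>\<^sub>v (MM *\<^sub>v v))" using e by simp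
    also have "\<dots> = k \<cdot>\<^sub>v (MI *\<^sub>v (MM *\<^sub>v v))" using car v mult_mat_vec[of MI N N "MM *\<^sub>v v" k] by simp
    also have "\<dots> = k \<cdot>\<^sub>v v" using mv by simp
    finally show "TT *\<^sub>v v = k \<cdot>\<^sub>v v" .
  qed
  define R where "R v a = (\<Sum>j<d. cf k (a div n) j *
       (\<Sum>q<n. complex_of_real (Bs ! j $$ (a mod n, q)) * v $ (j*n+q)))" for v a
  have key2: "UU *\<^sub>v v = k \<cdot>\<^sub>v (MM *\<^sub>v v) \<longleftrightarrow> (\<forall>a<N. R v a = k * v $ a)" if v: "v \<in> carrier_vec N" for v
  proof -
    have pt: "(UU *\<^sub>v v) $ a = k * (MM *\<^sub>v v) $ a \<longleftrightarrow> R v a = k * v $ a" if a: "a < N" for a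
    proof -
      have Me: "MM $$ (a,b) = (if a = b then 1 else 0) - LL $$ (a,b)" if b: "b < N" for b
        using a b by (cases "a = b") (simp_all add: MM_def LL_def c_def M_def L_def blockL_def N_def d_def)
      have "(MM *\<^sub>v v) $ a = (\<Sum>b<N. MM $$ (a,b) * v $ b)" by (rule mv_comp[OF car(3) v a])
      also have "\<dots> = (\<Sum>b<N. (if a = b then v $ a else 0) - LL $$ (a,b) * v $ b)"
        by (rule sum.cong) (auto simp: Me left_diff_distrib)
      also have "\<dots> = (\<Sum>b<N. (if a = b then v $ a else 0)) - (\<Sum>b<N. LL $$ (a,b) * v $ b)"
        by (rule sum_subtractf)
      also have "(\<Sum>b<N. (if a = b then v $ a else 0)) = v $ a" using a by simp
      finally have Ma: "(MM *\<^sub>v v) $ a = v $ a - (LL *\<^sub>v v) $ a" using mv_comp[OF car(5) v a] by simp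
      have e1: "(UU *\<^sub>v v) $ a + k * (LL *\<^sub>v v) $ a = (\<Sum>b<N. (UU $$ (a,b) + k * LL $$ (a,b)) * v $ b)"
        by (simp add: mv_comp[OF car(2) v a] mv_comp[OF car(5) v a] distrib_right sum.distrib
            sum_distrib_left mult.assoc)
      also have "\<dots> = (\<Sum>b<N. cf k (a div n) (b div n) *
           complex_of_real (Bs ! (b div n) $$ (a mod n, b mod n)) * v $ b)"
      proof (rule sum.cong)
        fix b assume "b \<in> {..<N}"
        then have b': "b < length Bs * n" by (simp add: N_def d_def)
        have a': "a < length Bs * n" using a by (simp add: N_def d_def)
        show "(UU $$ (a,b) + k * LL $$ (a,b)) * v $ b = cf k (a div n) (b div n) *
           complex_of_real (Bs ! (b div n) $$ (a mod n, b mod n)) * v $ b"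
          using a' b' by (simp add: UU_def LL_def c_def U_def L_def blockU_def blockL_def cf_def)
      qed simp
      also have "\<dots> = (\<Sum>j<d. \<Sum>q<n. cf k (a div n) ((j*n+q) div n) *
           complex_of_real (Bs ! ((j*n+q) div n) $$ (a mod n, (j*n+q) mod n)) * v $ (j*n+q))"
        unfolding N_def by (rule sum_split)
      also have "\<dots> = R v a" unfolding R_def by (auto simp: sum_distrib_left mult.assoc dq intro!: sum.cong)
      finally have UL: "(UU *\<^sub>v v) $ a + k * (LL *\<^sub>v v) $ a = R v a" .
      have m: "k * (MM *\<^sub>v v) $ a = k * v $ a - k * (LL *\<^sub>v v) $ a" using Ma by (simp add: right_diff_distrib)
      show ?thesis unfolding m eq_diff_eq UL by (rule refl)
    qed
    have "UU *\<^sub>v v = k \<cdot>\<^sub>v (MM *\<^sub>v v) \<longleftrightarrow> (\<forall>a<N. (UU *\<^sub>v v) $ a = k * (MM *\<^sub>v v) $ a)"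
      using car v by (auto simp: vec_eq_iff)
    also have "\<dots> \<longleftrightarrow> (\<forall>a<N. R v a = k * v $ a)" using pt by auto
    finally show ?thesis .
  qed
  have dimT: "dim_row TT = N" using car by auto
  have "eigenvalue TT k \<longleftrightarrow> (\<exists>v. v \<in> carrier_vec N \<and> v \<noteq> 0\<^sub>v N \<and> (\<forall>a<N. R v a = k * v $ a))"
    unfolding eigenvalue_def eigenvector_def dimT using key1 key2 by blast
  also have "\<dots> \<longleftrightarrow> (\<exists>x. (\<exists>i<d. \<exists>p<n. x i p \<noteq> 0) \<and> Gsys Bs n k x)"
  proof
    assume "\<exists>v. v \<in> carrier_vec N \<and> v \<noteq> 0\<^sub>v N \<and> (\<forall>a<N. R v a = k * v $ a)"
    then obtain v where v: "v \<in> carrier_vec N" "v \<noteq> 0\<^sub>v N" "\<forall>a<N. R v a = k * v $ a" by blast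
    define x where "x j q = v $ (j*n+q)" for j q
    have G: "Gsys Bs n k x" unfolding Gsys_def d_def[symmetric]
    proof (intro allI impI)
      fix i p assume ip: "i < d" "p < n"
      have a: "i*n+p < N" using idx_lt[OF ip] N_def by simp
      show "(\<Sum>j<d. cf k i j * (\<Sum>q<n. complex_of_real (Bs!j$$(p,q)) * x j q)) = k * x i p"
        using v(3)[rule_format, OF a] by (simp add: R_def x_def dq[OF ip(2)] mod_less[OF ip(2)])
    qed
    have "\<exists>a<N. v $ a \<noteq> 0"
    proof (rule ccontr)
      assume "\<not> (\<exists>a<N. v $ a \<noteq> 0)"
      then have "v = 0\<^sub>v N" using v(1) by (intro eq_vecI) auto
      with v(2) show False by simp
    qed
    then obtain a where a: "a < N" "v $ a \<noteq> 0" by blast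
    then have n0: "0 < n" using N_def by (cases n) auto
    have ad: "a div n < d" using a N_def by (simp add: less_mult_imp_div_less)
    have am: "a mod n < n" using n0 by simp
    have "x (a div n) (a mod n) = v $ a" by (simp add: x_def)
    then show "\<exists>x. (\<exists>i<d. \<exists>p<n. x i p \<noteq> 0) \<and> Gsys Bs n k x" using G ad am a(2) by metis
  next
    assume "\<exists>x. (\<exists>i<d. \<exists>p<n. x i p \<noteq> 0) \<and> Gsys Bs n k x"
    then obtain x i p where x: "i<d" "p<n" "x i p \<noteq> 0" "Gsys Bs n k x" by blast
    define v where "v = vec N (\<lambda>a. x (a div n) (a mod n))"
    have vc: "v \<in> carrier_vec N" by (simp add: v_def)
    have vi: "v $ (j*n+q) = x j q" if "j<d" "q<n" for j q
      using idx_lt[OF that] that by (simp add: v_def N_def dq)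
    have vnz: "v \<noteq> 0\<^sub>v N"
    proof
      assume "v = 0\<^sub>v N"
      then have "v $ (i*n+p) = 0" using idx_lt[OF x(1,2)] N_def by simp
      with vi x show False by simp
    qed
    have "\<forall>a<N. R v a = k * v $ a"
    proof (intro allI impI)
      fix a assume a: "a < N"
      then have n0: "0 < n" using N_def by (cases n) auto
      have ad: "a div n < d" using a N_def by (simp add: less_mult_imp_div_less)
      have am: "a mod n < n" using n0 by simp
      have va: "v $ a = x (a div n) (a mod n)" using a by (simp add: v_def)
      have in1: "\<forall>j\<in>{..<d}. (\<Sum>q<n. complex_of_real (Bs!j$$(a mod n,q)) * v $ (j*n+q))
                 = (\<Sum>q<n. complex_of_real (Bs!j$$(a mod n,q)) * x j q)"
        by (auto intro!: sum.cong simp: vi)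
      have "R v a = (\<Sum>j<d. cf k (a div n) j * (\<Sum>q<n. complex_of_real (Bs!j$$(a mod n,q)) * x j q))"
        unfolding R_def using in1 by (auto intro!: sum.cong)
      also have "\<dots> = k * v $ a" using x(4) ad am va unfolding Gsys_def d_def by auto
      finally show "R v a = k * v $ a" .
    qed
    then show "\<exists>v. v \<in> carrier_vec N \<and> v \<noteq> 0\<^sub>v N \<and> (\<forall>a<N. R v a = k * v $ a)" using vc vnz by blast
  qed
  finally show ?thesis by (simp add: TT_def c_def d_def)
qed

lemma Gsys_cong:
  assumes eq: "\<And>j q. j < length Bs \<Longrightarrow> q < n \<Longrightarrow> x j q = z j q"
  shows "Gsys Bs n k x = Gsys Bs n k z"
proof -
  have in1: "(\<Sum>q<n. complex_of_real (Bs!j$$(p,q)) * x j q) = (\<Sum>q<n. complex_of_real (Bs!j$$(p,q)) * z j q)"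
    if "j < length Bs" for j p
    by (rule sum.cong) (simp_all add: eq that)
  have in2: "(\<Sum>j<length Bs. cf k i j * (\<Sum>q<n. complex_of_real (Bs!j$$(p,q)) * x j q))
      = (\<Sum>j<length Bs. cf k i j * (\<Sum>q<n. complex_of_real (Bs!j$$(p,q)) * z j q))" for i p
    by (rule sum.cong) (simp_all add: in1)
  show ?thesis unfolding Gsys_def in2 using eq by auto
qed

lemma shift_G:
  fixes k :: complex and B :: "real mat"
  assumes k: "k \<noteq> 0"
  shows "Gsys (B # Cs) n k (\<lambda>j q. if j = 0 then x (length Cs) q else k * x (j - 1) q)
     \<longleftrightarrow> Gsys (Cs @ [B]) n k x"
proof -
  define m where "m = length Cs"
  define x' where "x' = (\<lambda>j q. if j = 0 then x m q else k * x (j - 1) q)"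
  define y where "y j p = (\<Sum>q<n. complex_of_real ((Cs @ [B]) ! j $$ (p,q)) * x j q)" for j p
  define Sh where "Sh i p = (\<Sum>j<Suc m. cf k i j *
      (\<Sum>q<n. complex_of_real ((B # Cs) ! j $$ (p,q)) * x' j q))" for i p
  define Og where "Og i p = (\<Sum>j<Suc m. cf k i j * y j p)" for i p
  have y0: "(\<Sum>q<n. complex_of_real ((B # Cs) ! 0 $$ (p,q)) * x' 0 q) = y m p" for p
    by (simp add: y_def x'_def m_def nth_append)
  have yS: "(\<Sum>q<n. complex_of_real (Cs ! j $$ (p,q)) * x' (Suc j) q) = k * y j p"
    if "j < m" for j p
    using that by (simp add: y_def x'_def m_def nth_append sum_distrib_left mult.left_commute)
  have Sh_eq: "Sh i p = cf k i 0 * y m p + (\<Sum>j<m. cf k i (Suc j) * (k * y j p))" for i p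
  proof -
    have "(\<Sum>j<m. cf k i (Suc j) * (\<Sum>q<n. complex_of_real ((B # Cs) ! Suc j $$ (p,q)) * x' (Suc j) q))
        = (\<Sum>j<m. cf k i (Suc j) * (k * y j p))"
      by (rule sum.cong) (simp_all add: yS)
    then show ?thesis unfolding Sh_def sum.lessThan_Suc_shift using y0 by simp
  qed
  have Og_eq: "Og i p = (\<Sum>j<m. cf k i j * y j p) + cf k i m * y m p" for i p
    unfolding Og_def by simp
  have a0: "Sh 0 p = Og m p" for p
  proof -
    have "(\<Sum>j<m. cf k m j * y j p) = (\<Sum>j<m. k * y j p)"
      by (rule sum.cong) (auto simp: cf_def)
    then show ?thesis by (simp add: Sh_eq Og_eq cf_def add.commute)
  qed
  have aS: "Sh (Suc i) p = k * Og i p" if "i < m" for i p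
  proof -
    have "(\<Sum>j<m. cf k (Suc i) (Suc j) * (k * y j p)) = k * (\<Sum>j<m. cf k i j * y j p)"
      by (simp add: cf_def sum_distrib_left mult.left_commute)
    moreover have "cf k (Suc i) 0 = k" "cf k i m = 1" using that by (auto simp: cf_def)
    ultimately show ?thesis by (simp add: Sh_eq Og_eq distrib_left add.commute)
  qed
  have L: "Gsys (B # Cs) n k x' \<longleftrightarrow> (\<forall>i<Suc m. \<forall>p<n. Sh i p = k * x' i p)"
    unfolding Gsys_def Sh_def m_def by simp
  have R: "Gsys (Cs @ [B]) n k x \<longleftrightarrow> (\<forall>i<Suc m. \<forall>p<n. Og i p = k * x i p)"
    unfolding Gsys_def Og_def y_def m_def by simp
  have "(\<forall>i<Suc m. \<forall>p<n. Sh i p = k * x' i p) \<longleftrightarrow>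
      (\<forall>p<n. Sh 0 p = k * x' 0 p) \<and> (\<forall>i<m. \<forall>p<n. Sh (Suc i) p = k * x' (Suc i) p)"
    by (auto simp: less_Suc_eq_0_disj)
  also have "\<dots> \<longleftrightarrow> (\<forall>p<n. Og m p = k * x m p) \<and> (\<forall>i<m. \<forall>p<n. Og i p = k * x i p)"
    using a0 aS k by (simp add: x'_def)
  also have "\<dots> \<longleftrightarrow> (\<forall>i<Suc m. \<forall>p<n. Og i p = k * x i p)"
    by (auto simp: less_Suc_eq)
  finally have C: "(\<forall>i<Suc m. \<forall>p<n. Sh i p = k * x' i p) \<longleftrightarrow> (\<forall>i<Suc m. \<forall>p<n. Og i p = k * x i p)" .
  have xe: "(\<lambda>j q. if j = 0 then x (length Cs) q else k * x (j - 1) q) = x'" unfolding x'_def m_def by (rule refl)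
  show ?thesis unfolding xe using L R C by simp
qed

lemma nz_step:
  fixes B :: "real mat"
  shows "nonzero_eigenvalues (iter_mat n (Cs @ [B])) = nonzero_eigenvalues (iter_mat n (B # Cs))"
proof -
  have "eigenvalue (map_mat complex_of_real (iter_mat n (Cs @ [B]))) k \<longleftrightarrow>
        eigenvalue (map_mat complex_of_real (iter_mat n (B # Cs))) k" if k: "k \<noteq> 0" for k
  proof -
    let ?m = "length Cs"
    have "(\<exists>x. (\<exists>i<length (Cs@[B]). \<exists>p<n. x i p \<noteq> 0) \<and> Gsys (Cs@[B]) n k x) \<longleftrightarrow>
          (\<exists>x. (\<exists>i<length (B#Cs). \<exists>p<n. x i p \<noteq> 0) \<and> Gsys (B#Cs) n k x)"
    proof
      assume "\<exists>x. (\<exists>i<length (Cs@[B]). \<exists>p<n. x i p \<noteq> 0) \<and> Gsys (Cs@[B]) n k x"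
      then obtain x i p where x: "i < Suc ?m" "p < n" "x i p \<noteq> 0" "Gsys (Cs@[B]) n k x" by auto
      define x' where "x' = (\<lambda>j q. if j = 0 then x ?m q else k * x (j - 1) q)"
      have "Gsys (B#Cs) n k x'" using shift_G[OF k, of B Cs n x] x(4) by (simp add: x'_def)
      moreover have "\<exists>i<Suc ?m. \<exists>p<n. x' i p \<noteq> 0"
      proof (cases "i = ?m")
        case True then show ?thesis using x by (intro exI[of _ 0]) (auto simp: x'_def)
      next
        case False then have "i < ?m" using x(1) by simp
        then show ?thesis using x k by (intro exI[of _ "Suc i"]) (auto simp: x'_def)
      qed
      ultimately show "\<exists>x. (\<exists>i<length (B#Cs). \<exists>p<n. x i p \<noteq> 0) \<and> Gsys (B#Cs) n k x" by auto
    next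
      assume "\<exists>x. (\<exists>i<length (B#Cs). \<exists>p<n. x i p \<noteq> 0) \<and> Gsys (B#Cs) n k x"
      then obtain x' i p where x': "i < Suc ?m" "p < n" "x' i p \<noteq> 0" "Gsys (B#Cs) n k x'" by auto
      define x where "x = (\<lambda>j q. if j = ?m then x' 0 q else x' (Suc j) q / k)"
      have eqx: "(if j = 0 then x ?m q else k * x (j - 1) q) = x' j q" if "j < length (B#Cs)" for j q
      proof (cases j)
        case 0 then show ?thesis by (simp add: x_def)
      next
        case (Suc j') then have "j' < ?m" using that by simp
        then show ?thesis using Suc k by (simp add: x_def)
      qed
      have "Gsys (B#Cs) n k (\<lambda>j q. if j = 0 then x ?m q else k * x (j - 1) q)"
        using x'(4) Gsys_cong[of "B#Cs" n "\<lambda>j q. if j = 0 then x ?m q else k * x (j - 1) q" x' k] eqx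
        by blast
      then have "Gsys (Cs@[B]) n k x" using shift_G[OF k, of B Cs n x] by simp
      moreover have "\<exists>i<Suc ?m. \<exists>p<n. x i p \<noteq> 0"
      proof (cases i)
        case 0 then show ?thesis using x' by (intro exI[of _ ?m]) (auto simp: x_def)
      next
        case (Suc j) then have "j < ?m" using x'(1) by simp
        then show ?thesis using x' k Suc by (intro exI[of _ j]) (auto simp: x_def)
      qed
      ultimately show "\<exists>x. (\<exists>i<length (Cs@[B]). \<exists>p<n. x i p \<noteq> 0) \<and> Gsys (Cs@[B]) n k x" by auto
    qed
    then show ?thesis by (simp only: eig_char)
  qed
  then show ?thesis unfolding nonzero_eigenvalues_def by auto
qed

lemma nz_cyc: "Bs \<noteq> [] \<Longrightarrow>
   nonzero_eigenvalues (iter_mat n Bs) = nonzero_eigenvalues (iter_mat n (cyc_shift Bs))"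
  by (metis append_butlast_last_id cyc_shift_def nz_step)

lemma len_cyc: "xs \<noteq> [] \<Longrightarrow> length (cyc_shift xs) = length xs"
  by (simp add: cyc_shift_def)

lemma iter_r:
  assumes ne: "Bs \<noteq> []"
  shows "nonzero_eigenvalues (iter_mat n Bs) = nonzero_eigenvalues (iter_mat n ((cyc_shift^^r) Bs))
     \<and> length ((cyc_shift^^r) Bs) = length Bs"
proof (induction r)
  case 0 show ?case by simp
next
  case (Suc r)
  let ?X = "(cyc_shift^^r) Bs"
  have ne2: "?X \<noteq> []" using Suc ne by auto
  show ?case using Suc.IH nz_cyc[OF ne2, of n] len_cyc[OF ne2] by simp
qed

lemma Max_lemma:
  fixes S :: "complex set"
  assumes "finite S" "S \<noteq> {}"
  shows "Max (norm ` S) = Max (insert 0 (norm ` (S - {0})))"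
proof -
  have e: "insert 0 (norm ` (S - {0})) = insert 0 (norm ` S)" by auto
  have fin: "finite (norm ` S)" "norm ` S \<noteq> {}" using assms by auto
  obtain s where s: "s \<in> S" using assms by auto
  have "norm s \<le> Max (norm ` S)" by (rule Max_ge[OF fin(1)]) (use s in auto)
  then have "0 \<le> Max (norm ` S)" using norm_ge_zero[of s] by linarith
  then show ?thesis unfolding e using Max_insert[OF fin] by (simp add: max_def)
qed

lemma sr_eq:
  assumes A: "A \<in> carrier_mat N N" and A': "A' \<in> carrier_mat N N"
    and nz: "nonzero_eigenvalues A = nonzero_eigenvalues A'"
  shows "spectral_radius (map_mat complex_of_real A) = spectral_radius (map_mat complex_of_real A')"
proof -
  let ?C = "map_mat complex_of_real A"
  let ?C' = "map_mat complex_of_real A'"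
  have S: "spectrum ?C - {0} = spectrum ?C' - {0}"
    using nz unfolding nonzero_eigenvalues_def spectrum_def by auto
  have Cc: "?C \<in> carrier_mat N N" "?C' \<in> carrier_mat N N" using A A' by auto
  show ?thesis
  proof (cases "N = 0")
    case True
    have nz0: "\<not> eigenvalue X k" if X: "X \<in> carrier_mat 0 0" for X :: "complex mat" and k
    proof
      assume "eigenvalue X k"
      then obtain v where v: "v \<in> carrier_vec 0" "v \<noteq> 0\<^sub>v 0"
        using X unfolding eigenvalue_def eigenvector_def by auto
      have "v = 0\<^sub>v 0" using v(1) by (intro eq_vecI) auto
      with v(2) show False by simp
    qed
    have "spectrum ?C = {}" "spectrum ?C' = {}"
      using Cc True nz0 unfolding spectrum_def by auto
    then show ?thesis by (simp add: spectral_radius_def)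
  next
    case False
    have ne: "spectrum ?C \<noteq> {}" "spectrum ?C' \<noteq> {}" using spectrum_non_empty Cc False by auto
    have fin: "finite (spectrum ?C)" "finite (spectrum ?C')"
      using card_finite_spectrum(1)[OF Cc(1)] card_finite_spectrum(1)[OF Cc(2)] by auto
    show ?thesis unfolding spectral_radius_def
      using Max_lemma[OF fin(1) ne(1)] Max_lemma[OF fin(2) ne(2)] S by simp
  qed
qed

theorem corollary2p1:
  fixes n r :: nat and BJ :: "real mat" and Bs :: "real mat list"
  assumes "is_splitting n BJ Bs"
  shows "nonzero_eigenvalues (iter_mat n Bs) = nonzero_eigenvalues (iter_mat n ((cyc_shift ^^ r) Bs))
         \<and> spectral_radius (map_mat complex_of_real (iter_mat n Bs))
           = spectral_radius (map_mat complex_of_real (iter_mat n ((cyc_shift ^^ r) Bs)))"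
proof -
  from assms have ne: "Bs \<noteq> []" unfolding is_splitting_def by auto
  from iter_r[OF ne, of n r] have 1: "nonzero_eigenvalues (iter_mat n Bs) =
      nonzero_eigenvalues (iter_mat n ((cyc_shift ^^ r) Bs))"
    and len: "length ((cyc_shift^^r) Bs) = length Bs" by auto
  have c2: "iter_mat n ((cyc_shift^^r) Bs) \<in> carrier_mat (length Bs * n) (length Bs * n)"
    using iter_carrier[of n "(cyc_shift^^r) Bs"] len by simp
  show ?thesis using 1 sr_eq[OF iter_carrier[of n Bs] c2 1] by simp
qed

end
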